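(* Let $N\ge 2$ and $R\ge N+1$ be integers. There is a set $\mathcal{F}$ of flows in the Clos network $C_{N,R}$, each with demand $1$ or $\tfrac12$ (and satisfying the demand assumption below), such that $OPT(\mathcal{F})=\tfrac32$.
   Context: Clos network $C_{N,R}$: a directed graph with $N$ middle switches $M_1,\dots,M_N$, $R$ input switches $I_1,\dots,I_R$, $R$ output switches $O_1,\dots,O_R$, source servers $s_i^k$ and destination servers $t_i^k$ ($i\in[R]$, $k\in[N]$), and edges $s_i^kI_i$, $I_iM_m$, $M_mO_i$, $O_it_i^k$ for all $i\in[R]$, $m,k\in[N]$; all links have capacity $1$. A flow $f$ has a source server $s(f)$ of input switch $I_{i(f)}$, a destination server $t(f)$ of output switch $O_{j(f)}$, and a positive demand $\mathrm{dem}(f)$. A set of flows must satisfy: the total demand of flows leaving any source server is at most $1$, and the total demand of flows entering any destination server is at most $1$. A routing $r$ assigns each flow a single middle switch $r(f)\in[N]$. The congestion of $r$ is $\max_{i\in[R],m\in[N]}\max\{\sum_{f:i(f)=i,r(f)=m}\mathrm{dem}(f),\ \sum_{f:j(f)=i,r(f)=m}\mathrm{dem}(f)\}$, and $OPT(\mathcal{F})$ is the minimum congestion over all routings of $\mathcal{F}$. *)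

theory Defs
  imports Complex_Main
begin

text \<open>Indices are 0-based: input/output switches i < R,
  servers k < N, middle switches m < N. A flow records the input switch i(f),
  the source server index k (server s_{i(f)}^k), the output switch j(f), the
  destination server index l (server t_{j(f)}^l), and its demand.
  A set of flows is a list (distinct flows may have identical data).\<close>

datatype flow = Flow (fin: nat) (fsrv: nat) (fout: nat) (tsrv: nat) (dem: real)

definition valid_flows :: "nat \<Rightarrow> nat \<Rightarrow> flow list \<Rightarrow> bool" where
  "valid_flows N R F \<longleftrightarrow>
     (\<forall>f\<in>set F. fin f < R \<and> fsrv f < N \<and> fout f < R \<and> tsrv f < N \<and> dem f > 0) \<and>
     (\<forall>i<R. \<forall>k<N. (\<Sum>x | x < length F \<and> fin (F!x) = i \<and> fsrv (F!x) = k. dem (F!x)) \<le> 1) \<and>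
     (\<forall>j<R. \<forall>l<N. (\<Sum>x | x < length F \<and> fout (F!x) = j \<and> tsrv (F!x) = l. dem (F!x)) \<le> 1)"

text \<open>A routing assigns to the x-th flow the middle switch r!x < N.\<close>

definition routings :: "nat \<Rightarrow> flow list \<Rightarrow> nat list set" where
  "routings N F = {r. length r = length F \<and> set r \<subseteq> {0..<N}}"

definition congestion :: "nat \<Rightarrow> nat \<Rightarrow> flow list \<Rightarrow> nat list \<Rightarrow> real" where
  "congestion N R F r = Max {max (\<Sum>x | x < length F \<and> fin (F!x) = i \<and> r!x = m. dem (F!x))
                                 (\<Sum>x | x < length F \<and> fout (F!x) = i \<and> r!x = m. dem (F!x))
                             | i m. i < R \<and> m < N}"

definition OPT :: "nat \<Rightarrow> nat \<Rightarrow> flow list \<Rightarrow> real" where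
  "OPT N R F = Min (congestion N R F ` routings N F)"

end

theory Submission
  imports Defs
begin

definition fl :: "nat \<Rightarrow> nat \<Rightarrow> flow" where
  "fl N x = (if x < N - 1 then Flow 0 x 0 x 1
     else if x < 2*N - 2 then Flow 1 (x - (N - 1)) 1 (x - (N - 1)) 1
     else if x = 2*N - 2 then Flow 1 (N - 1) 2 0 1
     else if x = 2*N - 1 then Flow 0 (N - 1) 1 (N - 1) (1/2)
     else Flow 0 (N - 1) 2 (N - 1) (1/2))"

definition FF :: "nat \<Rightarrow> flow list" where
  "FF N = map (fl N) [0..<2*N+1]"

definition rho :: "nat \<Rightarrow> nat \<Rightarrow> nat" where
  "rho N x = (if x < N - 1 then x else if x < 2*N - 2 then x - (N - 1) else N - 1)"

definition r0 :: "nat \<Rightarrow> nat list" where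
  "r0 N = map (rho N) [0..<2*N+1]"

lemma cong_finite: fixes r :: "nat list" and N R :: nat shows "finite {max (\<Sum>x | x < length F \<and> fin (F!x) = i \<and> r!x = m. dem (F!x))
                                 (\<Sum>x | x < length F \<and> fout (F!x) = i \<and> r!x = m. dem (F!x))
                             | i m. i < R \<and> m < N}"
  by (rule finite_image_set2; simp)

lemma cong_ge:
  fixes r :: "nat list" and N R :: nat
  assumes "i < R" "m < N"
  shows "(\<Sum>x | x < length F \<and> fin (F!x) = i \<and> r!x = m. dem (F!x)) \<le> congestion N R F r"
    and "(\<Sum>x | x < length F \<and> fout (F!x) = i \<and> r!x = m. dem (F!x)) \<le> congestion N R F r"
proof -
  have "max (\<Sum>x | x < length F \<and> fin (F!x) = i \<and> r!x = m. dem (F!x))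
                                 (\<Sum>x | x < length F \<and> fout (F!x) = i \<and> r!x = m. dem (F!x)) \<le> congestion N R F r"
    unfolding congestion_def using assms by (intro Max_ge[OF cong_finite]) blast
  then show "(\<Sum>x | x < length F \<and> fin (F!x) = i \<and> r!x = m. dem (F!x)) \<le> congestion N R F r"
    and "(\<Sum>x | x < length F \<and> fout (F!x) = i \<and> r!x = m. dem (F!x)) \<le> congestion N R F r"
    by auto
qed

lemma cong_le:
  fixes r :: "nat list" and N R :: nat
  assumes "R > 0" "N > 0"
    and "\<And>i m. i < R \<Longrightarrow> m < N \<Longrightarrow> (\<Sum>x | x < length F \<and> fin (F!x) = i \<and> r!x = m. dem (F!x)) \<le> c"
    and "\<And>i m. i < R \<Longrightarrow> m < N \<Longrightarrow> (\<Sum>x | x < length F \<and> fout (F!x) = i \<and> r!x = m. dem (F!x)) \<le> c"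
  shows "congestion N R F r \<le> c"
  unfolding congestion_def
  apply (subst Max_le_iff[OF cong_finite])
  using assms by auto

lemma sum_pair:
  fixes g :: "nat \<Rightarrow> real"
  assumes "finite S" "x \<in> S" "y \<in> S" "x \<noteq> y" "\<And>z. z \<in> S \<Longrightarrow> g z \<ge> 0"
  shows "g x + g y \<le> sum g S"
proof -
  have "sum g {x, y} \<le> sum g S"
    by (rule sum_mono2) (use assms in auto)
  then show ?thesis using assms by simp
qed

lemma pair_in:
  fixes r :: "nat list" and N R :: nat
  assumes "\<forall>f\<in>set F. dem f \<ge> 0" "x \<noteq> y" "x < length F" "y < length F"
    "fin (F!x) = i" "fin (F!y) = i" "r!x = r!y" "i < R" "r!x < N"
  shows "dem (F!x) + dem (F!y) \<le> congestion N R F r"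
proof -
  have "dem (F!x) + dem (F!y) \<le> (\<Sum>z | z < length F \<and> fin (F!z) = i \<and> r!z = r!x. dem (F!z))"
    by (rule sum_pair) (use assms in auto)
  also have "\<dots> \<le> congestion N R F r" by (rule cong_ge) (use assms in auto)
  finally show ?thesis .
qed

lemma pair_out:
  fixes r :: "nat list" and N R :: nat
  assumes "\<forall>f\<in>set F. dem f \<ge> 0" "x \<noteq> y" "x < length F" "y < length F"
    "fout (F!x) = i" "fout (F!y) = i" "r!x = r!y" "i < R" "r!x < N"
  shows "dem (F!x) + dem (F!y) \<le> congestion N R F r"
proof -
  have "dem (F!x) + dem (F!y) \<le> (\<Sum>z | z < length F \<and> fout (F!z) = i \<and> r!z = r!x. dem (F!z))"
    by (rule sum_pair) (use assms in auto)
  also have "\<dots> \<le> congestion N R F r" by (rule cong_ge) (use assms in auto)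
  finally show ?thesis .
qed

lemma card_lemma:
  fixes S :: "nat set"
  assumes "S \<subseteq> {0..<N}" "card S = N - 1" "a < N" "b < N" "a \<notin> S" "b \<notin> S" "N > 0"
  shows "a = b"
proof (rule ccontr)
  assume "a \<noteq> b"
  have fin: "finite S" using assms(1) finite_subset by blast
  have sub: "insert a (insert b S) \<subseteq> {0..<N}" using assms(1,3,4) by simp
  have le: "card (insert a (insert b S)) \<le> card {0..<N}"
    by (rule card_mono[OF _ sub]) simp
  have bS: "b \<notin> S" by (rule assms(6))
  have aS: "a \<notin> insert b S" using assms(5) \<open>a \<noteq> b\<close> by simp
  have "card (insert a (insert b S)) = Suc (Suc (card S))"
    using fin aS bS by simp
  then have "card (insert a (insert b S)) = N + 1" using assms(2,7) by simp
  moreover have "card (insert a (insert b S)) \<le> N" using le by simp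
  ultimately show False by simp
qed

lemma fl_A: "x < N - 1 \<Longrightarrow> fl N x = Flow 0 x 0 x 1" by (simp add: fl_def)
lemma fl_B: "N \<ge> 2 \<Longrightarrow> N - 1 \<le> x \<Longrightarrow> x < 2*N - 2 \<Longrightarrow> fl N x = Flow 1 (x - (N - 1)) 1 (x - (N - 1)) 1"
  by (simp add: fl_def)
lemma fl_C: "N \<ge> 2 \<Longrightarrow> fl N (2*N - 2) = Flow 1 (N - 1) 2 0 1" by (simp add: fl_def)
lemma fl_D: "N \<ge> 2 \<Longrightarrow> fl N (2*N - 1) = Flow 0 (N - 1) 1 (N - 1) (1/2)" by (auto simp: fl_def)
lemma fl_E: "N \<ge> 2 \<Longrightarrow> fl N (2*N) = Flow 0 (N - 1) 2 (N - 1) (1/2)" by (auto simp: fl_def)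

lemma FF_len[simp]: "length (FF N) = 2*N+1" by (simp add: FF_def)
lemma FF_nth[simp]: "x < 2*N+1 \<Longrightarrow> FF N ! x = fl N x" by (simp add: FF_def del: upt_Suc)
lemma FF_nth'[simp]: "x < Suc (2*N) \<Longrightarrow> FF N ! x = fl N x" by (simp add: FF_def del: upt_Suc)
lemma r0_nth'[simp]: "x < Suc (2*N) \<Longrightarrow> r0 N ! x = rho N x" by (simp add: r0_def del: upt_Suc)
lemma FF_set: "set (FF N) = fl N ` {0..<2*N+1}" by (simp add: FF_def del: upt_Suc)
lemma r0_len[simp]: "length (r0 N) = 2*N+1" by (simp add: r0_def)
lemma r0_nth[simp]: "x < 2*N+1 \<Longrightarrow> r0 N ! x = rho N x" by (simp add: r0_def del: upt_Suc)

lemma dem_fl: "dem (fl N x) = 1 \<or> dem (fl N x) = 1/2" by (simp add: fl_def)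
lemma dem_pos: "dem (fl N x) > 0" by (simp add: fl_def)
lemma dem_le1: "dem (fl N x) \<le> 1" by (simp add: fl_def)

lemma dem_FF_le1: "x < length (FF N) \<Longrightarrow> dem (FF N ! x) \<le> 1"
  by (simp add: FF_def dem_le1 del: upt_Suc)

lemma dem_FF_pos: "x < length (FF N) \<Longrightarrow> dem (FF N ! x) > 0"
  by (simp add: FF_def dem_pos del: upt_Suc)

lemma sum_le_single:
  fixes g :: "nat \<Rightarrow> real"
  assumes "\<forall>x\<in>S. \<forall>y\<in>S. x = y" "\<forall>x\<in>S. g x \<le> 1"
  shows "sum g S \<le> 1"
proof (cases "S = {}")
  case False
  then obtain a where "a \<in> S" by blast
  then have "S = {a}" using assms(1) by blast
  then show ?thesis using assms(2) by simp
qed simp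

lemma sum_le_32:
  fixes g :: "nat \<Rightarrow> real"
  assumes "finite S" "\<forall>x\<in>S-{c}. \<forall>y\<in>S-{c}. x = y" "\<forall>x\<in>S. g x \<le> 1" "g c \<le> 1/2" "\<forall>x\<in>S. g x \<ge> 0"
  shows "sum g S \<le> 3/2"
proof (cases "c \<in> S")
  case True
  then have "sum g S = g c + sum g (S - {c})" using assms(1) by (simp add: sum.remove)
  moreover have "sum g (S - {c}) \<le> 1" by (rule sum_le_single) (use assms in auto)
  ultimately show ?thesis using assms(4) by simp
next
  case False
  then have "S - {c} = S" by simp
  then have "sum g S \<le> 1" using sum_le_single[of "S - {c}" g] assms by simp
  then show ?thesis by simp
qed


lemma xcases2: "(x::nat) < 2*N \<Longrightarrow> x < N - 1 \<or> (N - 1 \<le> x \<and> x < 2*N - 2) \<or> x = 2*N - 2 \<or> x = 2*N - 1"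
  by linarith

lemma xcases: "(x::nat) < 2*N+1 \<Longrightarrow> x < N - 1 \<or> (N - 1 \<le> x \<and> x < 2*N - 2) \<or> x = 2*N - 2 \<or> x = 2*N - 1 \<or> x = 2*N"
  by linarith

lemma rho_A: "x < N - 1 \<Longrightarrow> rho N x = x" by (simp add: rho_def)
lemma rho_B: "N - 1 \<le> x \<Longrightarrow> x < 2*N - 2 \<Longrightarrow> rho N x = x - (N - 1)" by (simp add: rho_def)
lemma rho_C: "N \<ge> 2 \<Longrightarrow> rho N (2*N - 2) = N - 1" by (simp add: rho_def)
lemma rho_D: "N \<ge> 2 \<Longrightarrow> rho N (2*N - 1) = N - 1" by (simp add: rho_def)

definition decS :: "nat \<Rightarrow> nat \<Rightarrow> nat \<Rightarrow> nat" where
  "decS N i k = (if i = 0 then k else if k < N - 1 then k + (N - 1) else 2*N - 2)"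
definition decO :: "nat \<Rightarrow> nat \<Rightarrow> nat \<Rightarrow> nat" where
  "decO N j l = (if j = 0 then l else if j = 1 then (if l < N - 1 then l + (N - 1) else 2*N - 1)
     else if l = 0 then 2*N - 2 else 2*N)"
definition decI :: "nat \<Rightarrow> nat \<Rightarrow> nat \<Rightarrow> nat" where
  "decI N i m = (if i = 0 then (if m < N - 1 then m else 2*N - 1) else (if m < N - 1 then m + (N - 1) else 2*N - 2))"
definition decR :: "nat \<Rightarrow> nat \<Rightarrow> nat \<Rightarrow> nat" where
  "decR N j m = (if j = 0 then m else if j = 1 then (if m < N - 1 then m + (N - 1) else 2*N - 1) else 2*N - 2)"

lemma decS_ok: assumes N: "N \<ge> 2" and x: "x < 2*N - 1"
  shows "x = decS N (fin (fl N x)) (fsrv (fl N x))" "\<not> (fin (fl N x) = 0 \<and> fsrv (fl N x) = N - 1)"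
proof -
  have "x < N - 1 \<or> (N - 1 \<le> x \<and> x < 2*N - 2) \<or> x = 2*N - 2" using x by linarith
  then show "x = decS N (fin (fl N x)) (fsrv (fl N x))" "\<not> (fin (fl N x) = 0 \<and> fsrv (fl N x) = N - 1)"
    using N by (auto simp: fl_A fl_B fl_C decS_def)
qed

lemma fl_D': "N \<ge> 2 \<Longrightarrow> fl N (2*N - Suc 0) = Flow 0 (N - 1) 1 (N - 1) (1/2)"
  using fl_D[of N] by simp

lemma rho_D': "N \<ge> 2 \<Longrightarrow> rho N (2*N - Suc 0) = N - 1"
  using rho_D[of N] by simp

lemma decS_hi: assumes N: "N \<ge> 2" and x: "2*N - 1 \<le> x" "x < 2*N+1"
  shows "fin (fl N x) = 0 \<and> fsrv (fl N x) = N - 1"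
proof -
  have "x = 2*N - 1 \<or> x = 2*N" using x N by linarith
  then show ?thesis using N by (auto simp: fl_D' fl_E)
qed

lemma in_srv: assumes N: "N \<ge> 2" shows "x < 2*N+1 \<Longrightarrow> y < 2*N+1 \<Longrightarrow> x \<noteq> y \<Longrightarrow>
   fin (fl N x) = fin (fl N y) \<Longrightarrow> fsrv (fl N x) = fsrv (fl N y) \<Longrightarrow> x \<ge> 2*N - 1 \<and> y \<ge> 2*N - 1"
  using decS_ok[OF N, of x] decS_ok[OF N, of y] decS_hi[OF N, of x] decS_hi[OF N, of y]
  by (metis not_le)

lemma decO_ok: assumes N: "N \<ge> 2" and x: "x < 2*N + 1"
  shows "x = decO N (fout (fl N x)) (tsrv (fl N x))"
proof -
  have "x < N - 1 \<or> (N - 1 \<le> x \<and> x < 2*N - 2) \<or> x = 2*N - 2 \<or> x = 2*N - 1 \<or> x = 2*N" using x by linarith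
  then show ?thesis
    using N by (auto simp: fl_A fl_B fl_C fl_D' fl_E decO_def)
qed

lemma out_srv: assumes N: "N \<ge> 2" shows "x < 2*N+1 \<Longrightarrow> y < 2*N+1 \<Longrightarrow>
   fout (fl N x) = fout (fl N y) \<Longrightarrow> tsrv (fl N x) = tsrv (fl N y) \<Longrightarrow> x = y"
  using decO_ok[OF N, of x] decO_ok[OF N, of y] by metis

lemma decI_ok: assumes N: "N \<ge> 2" and x: "x < 2*N"
  shows "x = decI N (fin (fl N x)) (rho N x)"
proof -
  have "x < N - 1 \<or> (N - 1 \<le> x \<and> x < 2*N - 2) \<or> x = 2*N - 2 \<or> x = 2*N - 1" using x by linarith
  then show ?thesis
    using N by (auto simp: fl_A fl_B fl_C fl_D' rho_A rho_B rho_C rho_D rho_D' decI_def)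
qed

lemma in_rho: assumes N: "N \<ge> 2" shows "x < 2*N \<Longrightarrow> y < 2*N \<Longrightarrow>
   fin (fl N x) = fin (fl N y) \<Longrightarrow> rho N x = rho N y \<Longrightarrow> x = y"
  using decI_ok[OF N, of x] decI_ok[OF N, of y] by metis

lemma decR_ok: assumes N: "N \<ge> 2" and x: "x < 2*N"
  shows "x = decR N (fout (fl N x)) (rho N x)"
proof -
  have "x < N - 1 \<or> (N - 1 \<le> x \<and> x < 2*N - 2) \<or> x = 2*N - 2 \<or> x = 2*N - 1" using x by linarith
  then show ?thesis
    using N by (auto simp: fl_A fl_B fl_C fl_D' rho_A rho_B rho_C rho_D rho_D' decR_def)
qed

lemma out_rho: assumes N: "N \<ge> 2" shows "x < 2*N \<Longrightarrow> y < 2*N \<Longrightarrow>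
   fout (fl N x) = fout (fl N y) \<Longrightarrow> rho N x = rho N y \<Longrightarrow> x = y"
  using decR_ok[OF N, of x] decR_ok[OF N, of y] by metis

lemma fl_bounds: "N \<ge> 2 \<Longrightarrow> fin (fl N x) \<le> 1 \<and> fsrv (fl N x) < N \<and> fout (fl N x) \<le> 2 \<and> tsrv (fl N x) < N"
  unfolding fl_def by auto

lemma FF_valid:
  assumes "N \<ge> 2" "R \<ge> N + 1"
  shows "valid_flows N R (FF N)"
  unfolding valid_flows_def
proof (intro conjI allI impI)
  show "\<forall>f\<in>set (FF N). fin f < R \<and> fsrv f < N \<and> fout f < R \<and> tsrv f < N \<and> dem f > 0"
  proof
    fix f assume "f \<in> set (FF N)"
    then obtain x where f: "f = fl N x" unfolding FF_set by blast
    show "fin f < R \<and> fsrv f < N \<and> fout f < R \<and> tsrv f < N \<and> dem f > 0"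
      using fl_bounds[OF assms(1), of x] dem_pos[of N x] assms unfolding f by linarith
  qed
next
  fix i k assume "i < R" "k < N"
  let ?S = "{x. x < length (FF N) \<and> fin (FF N ! x) = i \<and> fsrv (FF N ! x) = k}"
  have S: "x \<in> ?S \<longleftrightarrow> x < 2*N+1 \<and> fin (fl N x) = i \<and> fsrv (fl N x) = k" for x by auto
  show "(\<Sum>x\<in>?S. dem (FF N ! x)) \<le> 1"
  proof (cases "\<exists>x\<in>?S. x < 2*N - 1")
    case True
    then obtain a where a: "a \<in> ?S" "a < 2*N - 1" by blast
    have eq: "x = a" if "x \<in> ?S" for x
    proof (rule ccontr)
      assume "x \<noteq> a"
      then have "a \<ge> 2*N - 1" using in_srv[OF assms(1), of a x] a that unfolding S by metis
      then show False using a(2) by simp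
    qed
    have "\<forall>x\<in>?S. \<forall>y\<in>?S. x = y" using eq by metis
    then show ?thesis by (rule sum_le_single) (simp add: dem_FF_le1 dem_le1)
  next
    case False
    then have "?S \<subseteq> {2*N - 1, 2*N}" by auto
    then have "(\<Sum>x\<in>?S. dem (FF N ! x)) \<le> (\<Sum>x\<in>{2*N - 1, 2*N}. dem (FF N ! x))"
      by (intro sum_mono2) (auto simp: dem_pos less_imp_le)
    also have "\<dots> = 1" using assms fl_D[OF assms(1)] fl_E[OF assms(1)] by simp
    finally show ?thesis .
  qed
next
  fix j l assume "j < R" "l < N"
  let ?S = "{x. x < length (FF N) \<and> fout (FF N ! x) = j \<and> tsrv (FF N ! x) = l}"
  have "\<forall>x\<in>?S. \<forall>y\<in>?S. x = y"
  proof (intro ballI)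
    fix x y assume x: "x \<in> ?S" and y: "y \<in> ?S"
    have S: "z \<in> ?S \<longleftrightarrow> z < 2*N+1 \<and> fout (fl N z) = j \<and> tsrv (fl N z) = l" for z by auto
    have x': "x < 2*N+1" "fout (fl N x) = j" "tsrv (fl N x) = l" using x unfolding S by simp_all
    have y': "y < 2*N+1" "fout (fl N y) = j" "tsrv (fl N y) = l" using y unfolding S by simp_all
    show "x = y" using out_srv[OF assms(1) x'(1) y'(1)] x'(2,3) y'(2,3) by simp
  qed
  then show "(\<Sum>x\<in>?S. dem (FF N ! x)) \<le> 1" by (rule sum_le_single) (simp add: dem_FF_le1 dem_le1)
qed

lemma rho_lt: "N \<ge> 2 \<Longrightarrow> rho N x < N" by (auto simp: rho_def)

lemma r0_routing: "N \<ge> 2 \<Longrightarrow> r0 N \<in> routings N (FF N)"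
  by (auto simp: routings_def r0_def rho_lt)

lemma r0_cong:
  assumes "N \<ge> 2" "R \<ge> N + 1"
  shows "congestion N R (FF N) (r0 N) \<le> 3/2"
proof (rule cong_le)
  show "R > 0" "N > 0" using assms by auto
next
  fix i m assume "i < R" "m < N"
  let ?S = "{x. x < length (FF N) \<and> fin (FF N ! x) = i \<and> r0 N ! x = m}"
  have S: "z \<in> ?S \<longleftrightarrow> z < 2*N+1 \<and> fin (fl N z) = i \<and> rho N z = m" for z by auto
  show "(\<Sum>x\<in>?S. dem (FF N ! x)) \<le> 3/2"
  proof (rule sum_le_32[where c = "2*N"])
    show "\<forall>x\<in>?S-{2*N}. \<forall>y\<in>?S-{2*N}. x = y"
    proof (intro ballI)
      fix x y assume x: "x \<in> ?S-{2*N}" and y: "y \<in> ?S-{2*N}"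
      have x': "x < 2*N" "fin (fl N x) = i" "rho N x = m" using x unfolding S by auto
      have y': "y < 2*N" "fin (fl N y) = i" "rho N y = m" using y unfolding S by auto
      show "x = y" using in_rho[OF assms(1) x'(1) y'(1)] x'(2,3) y'(2,3) by simp
    qed
    show "\<forall>x\<in>?S. dem (FF N ! x) \<le> 1" by (simp add: dem_FF_le1 dem_le1)
    show "\<forall>x\<in>?S. dem (FF N ! x) \<ge> 0" by (simp add: dem_FF_pos less_imp_le dem_pos)
    show "dem (FF N ! (2*N)) \<le> 1/2" using fl_E[OF assms(1)] by simp
  qed simp
next
  fix i m assume "i < R" "m < N"
  let ?S = "{x. x < length (FF N) \<and> fout (FF N ! x) = i \<and> r0 N ! x = m}"
  have S: "z \<in> ?S \<longleftrightarrow> z < 2*N+1 \<and> fout (fl N z) = i \<and> rho N z = m" for z by auto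
  show "(\<Sum>x\<in>?S. dem (FF N ! x)) \<le> 3/2"
  proof (rule sum_le_32[where c = "2*N"])
    show "\<forall>x\<in>?S-{2*N}. \<forall>y\<in>?S-{2*N}. x = y"
    proof (intro ballI)
      fix x y assume x: "x \<in> ?S-{2*N}" and y: "y \<in> ?S-{2*N}"
      have x': "x < 2*N" "fout (fl N x) = i" "rho N x = m" using x unfolding S by auto
      have y': "y < 2*N" "fout (fl N y) = i" "rho N y = m" using y unfolding S by auto
      show "x = y" using out_rho[OF assms(1) x'(1) y'(1)] x'(2,3) y'(2,3) by simp
    qed
    show "\<forall>x\<in>?S. dem (FF N ! x) \<le> 1" by (simp add: dem_FF_le1 dem_le1)
    show "\<forall>x\<in>?S. dem (FF N ! x) \<ge> 0" by (simp add: dem_FF_pos less_imp_le dem_pos)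
    show "dem (FF N ! (2*N)) \<le> 1/2" using fl_E[OF assms(1)] by simp
  qed simp
qed

lemma FFA: "x < N - 1 \<Longrightarrow> FF N ! x = Flow 0 x 0 x 1"
  using fl_A[of x N] by (simp add: FF_def nth_map del: upt_Suc)
lemma FFB: "N \<ge> 2 \<Longrightarrow> N - 1 \<le> x \<Longrightarrow> x < 2*N - 2 \<Longrightarrow> FF N ! x = Flow 1 (x - (N - 1)) 1 (x - (N - 1)) 1"
  using fl_B[of N x] by (simp add: FF_def nth_map del: upt_Suc)
lemma FFC: "N \<ge> 2 \<Longrightarrow> FF N ! (2*N - 2) = Flow 1 (N - 1) 2 0 1"
  using fl_C[of N] by (simp add: FF_def nth_map del: upt_Suc)
lemma FFD: "N \<ge> 2 \<Longrightarrow> FF N ! (2*N - 1) = Flow 0 (N - 1) 1 (N - 1) (1/2)"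
  using fl_D[of N] by (simp add: FF_def nth_map del: upt_Suc)
lemma FFD': "N \<ge> 2 \<Longrightarrow> FF N ! (2*N - Suc 0) = Flow 0 (N - 1) 1 (N - 1) (1/2)"
  using FFD[of N] by simp
lemma FFE: "N \<ge> 2 \<Longrightarrow> FF N ! (2*N) = Flow 0 (N - 1) 2 (N - 1) (1/2)"
  using fl_E[of N] by (simp add: FF_def nth_map del: upt_Suc)

lemma lower:
  assumes N: "N \<ge> 2" and R: "R \<ge> N + 1" and r: "r \<in> routings N (FF N)"
  shows "congestion N R (FF N) r \<ge> 3/2"
proof (rule ccontr)
  assume "\<not> congestion N R (FF N) r \<ge> 3/2"
  then have c: "congestion N R (FF N) r < 3/2" by simp
  let ?F = "FF N"
  have nn: "\<forall>f\<in>set ?F. dem f \<ge> 0" unfolding FF_set using dem_pos less_imp_le by blast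
  have lr: "length r = 2*N+1" using r unfolding routings_def by simp
  have sr: "set r \<subseteq> {0..<N}" using r unfolding routings_def by simp
  have rN: "r!x < N" if "x < 2*N+1" for x
  proof -
    have "r!x \<in> set r" using that lr by (intro nth_mem) simp
    then show ?thesis using sr by auto
  qed
  have lF: "length ?F = 2*N+1" by simp
  have A: "r!x \<noteq> r!y" if "x < N - 1" "y < N - 1" "x \<noteq> y" for x y
  proof
    assume e: "r!x = r!y"
    have "dem (?F!x) + dem (?F!y) \<le> congestion N R ?F r"
      by (rule pair_in[OF nn \<open>x \<noteq> y\<close> _ _ _ _ e, where i=0])
         (use that N R rN[of x] in \<open>simp_all add: FFA del: FF_nth FF_nth'\<close>)
    then show False using c that FFA[of x N] FFA[of y N] by simp
  qed
  have AD: "r!x \<noteq> r!(2*N-1)" if "x < N - 1" for x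
  proof
    assume e: "r!x = r!(2*N-1)"
    have "dem (?F!x) + dem (?F!(2*N-1)) \<le> congestion N R ?F r"
      by (rule pair_in[OF nn _ _ _ _ _ e, where i=0])
         (use that N R rN[of x] in \<open>simp_all add: FFA FFD FFD' del: FF_nth FF_nth'\<close>)
    then show False using c that FFA[of x N] FFD[OF N] by simp
  qed
  have AE: "r!x \<noteq> r!(2*N)" if "x < N - 1" for x
  proof
    assume e: "r!x = r!(2*N)"
    have "dem (?F!x) + dem (?F!(2*N)) \<le> congestion N R ?F r"
      by (rule pair_in[OF nn _ _ _ _ _ e, where i=0])
         (use that N R rN[of x] in \<open>simp_all add: FFA FFE del: FF_nth FF_nth'\<close>)
    then show False using c that FFA[of x N] FFE[OF N] by simp
  qed
  have fx: "fin (?F!x) = 1 \<and> dem (?F!x) = 1" if "N - 1 \<le> x" "x \<le> 2*N-2" for x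
  proof (cases "x = 2*N-2")
    case True then show ?thesis using FFC[OF N] by simp
  next
    case False then show ?thesis using FFB[OF N that(1)] that by simp
  qed
  have B: "r!x \<noteq> r!y" if "N - 1 \<le> x" "x \<le> 2*N-2" "N - 1 \<le> y" "y \<le> 2*N-2" "x \<noteq> y" for x y
  proof
    assume e: "r!x = r!y"
    have "dem (?F!x) + dem (?F!y) \<le> congestion N R ?F r"
      by (rule pair_in[OF nn \<open>x \<noteq> y\<close> _ _ _ _ e, where i=1])
         (use that N R rN[of x] fx[of x] fx[of y] in \<open>simp_all del: FF_nth FF_nth'\<close>)
    then show False using c fx[of x] fx[of y] that by simp
  qed
  have BD: "r!x \<noteq> r!(2*N-1)" if "N - 1 \<le> x" "x < 2*N-2" for x
  proof
    assume e: "r!x = r!(2*N-1)"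
    have "dem (?F!x) + dem (?F!(2*N-1)) \<le> congestion N R ?F r"
      by (rule pair_out[OF nn _ _ _ _ _ e, where i=1])
         (use that N R rN[of x] in \<open>simp_all add: FFB FFD FFD' del: FF_nth FF_nth'\<close>)
    then show False using c FFB[OF N that] FFD[OF N] by simp
  qed
  have CE: "r!(2*N-2) \<noteq> r!(2*N)"
  proof
    assume e: "r!(2*N-2) = r!(2*N)"
    have "dem (?F!(2*N-2)) + dem (?F!(2*N)) \<le> congestion N R ?F r"
      by (rule pair_out[OF nn _ _ _ _ _ e, where i=2])
         (use N R rN[of "2*N-2"] in \<open>simp_all add: FFC FFE del: FF_nth FF_nth'\<close>)
    then show False using c FFC[OF N] FFE[OF N] by simp
  qed
  have injA: "inj_on (\<lambda>x. r!x) {0..<N-1}"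
    by (rule inj_onI) (use A in force)
  have S1: "card ((\<lambda>x. r!x) ` {0..<N-1}) = N - 1"
    using card_image[OF injA] by simp
  have S1s: "(\<lambda>x. r!x) ` {0..<N-1} \<subseteq> {0..<N}"
  proof
    fix z assume "z \<in> (\<lambda>x. r!x) ` {0..<N-1}"
    then obtain x where "x < N - 1" "z = r!x" by auto
    then show "z \<in> {0..<N}" using rN[of x] by simp
  qed
  have DE: "r!(2*N-1) = r!(2*N)"
  proof (rule card_lemma[OF S1s S1])
    show "r!(2*N-1) < N" "r!(2*N) < N" "N > 0" using rN N by simp_all
    show "r!(2*N-1) \<notin> (\<lambda>x. r!x) ` {0..<N-1}" using AD by force
    show "r!(2*N) \<notin> (\<lambda>x. r!x) ` {0..<N-1}" using AE by force
  qed
  have injB: "inj_on (\<lambda>x. r!x) {N-1..<2*N-2}"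
  proof (rule inj_onI)
    fix x y assume "x \<in> {N-1..<2*N-2}" "y \<in> {N-1..<2*N-2}" "r!x = r!y"
    then show "x = y" using B[of x y] by force
  qed
  have S2: "card ((\<lambda>x. r!x) ` {N-1..<2*N-2}) = N - 1"
    using card_image[OF injB] N by simp
  have S2s: "(\<lambda>x. r!x) ` {N-1..<2*N-2} \<subseteq> {0..<N}"
  proof
    fix z assume "z \<in> (\<lambda>x. r!x) ` {N-1..<2*N-2}"
    then obtain x where "x < 2*N-2" "z = r!x" by auto
    then show "z \<in> {0..<N}" using rN[of x] by simp
  qed
  have DC: "r!(2*N-1) = r!(2*N-2)"
  proof (rule card_lemma[OF S2s S2])
    show "r!(2*N-1) < N" "r!(2*N-2) < N" "N > 0" using rN N by simp_all
    show "r!(2*N-1) \<notin> (\<lambda>x. r!x) ` {N-1..<2*N-2}" using BD by force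
    show "r!(2*N-2) \<notin> (\<lambda>x. r!x) ` {N-1..<2*N-2}"
    proof
      assume "r!(2*N-2) \<in> (\<lambda>x. r!x) ` {N-1..<2*N-2}"
      then obtain x where x: "N - 1 \<le> x" "x < 2*N-2" "r!(2*N-2) = r!x" by auto
      then show False using B[of x "2*N-2"] N by simp
    qed
  qed
  show False using DE DC CE by simp
qed

theorem mainTheorem2:
  fixes N R :: nat
  assumes "N \<ge> 2" and "R \<ge> N + 1"
  shows "\<exists>F. valid_flows N R F \<and> (\<forall>f\<in>set F. dem f = 1 \<or> dem f = 1/2) \<and> OPT N R F = 3/2"
proof (intro exI conjI)
  show "valid_flows N R (FF N)" using FF_valid assms .
  show "\<forall>f\<in>set (FF N). dem f = 1 \<or> dem f = 1/2" unfolding FF_set using dem_fl by blast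
  have fin: "finite (routings N (FF N))"
    unfolding routings_def using finite_lists_length_eq[of "{0..<N}" "length (FF N)"]
    by (simp add: conj_commute)
  have r0: "r0 N \<in> routings N (FF N)" using r0_routing assms(1) .
  have "OPT N R (FF N) \<le> congestion N R (FF N) (r0 N)"
    unfolding OPT_def using fin r0 by (intro Min_le) auto
  also have "\<dots> \<le> 3/2" using r0_cong assms .
  finally have "OPT N R (FF N) \<le> 3/2" .
  moreover have "OPT N R (FF N) \<ge> 3/2"
    unfolding OPT_def using fin r0 lower[OF assms] by (subst Min_ge_iff) auto
  ultimately show "OPT N R (FF N) = 3/2" by simp
qed

end
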